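(* Let $C$ be a cycle and $P$ a path (in some graph) such that $C\cup P$ is the exceptional graph. Then $C$ has length $5$, $V(C)\subseteq V(P)$, and the subgraph of $C\cup P$ induced by $V(C)$ is isomorphic to $K_5^-$.
   Context: $K_5^-$ is $K_5$ minus one edge. The exceptional graph is a graph that is the union of an edge-disjoint cycle $C_0$ of length $5$ and path $P_0$ such that $V(C_0)\subseteq V(P_0)$ and $V(C_0)$ induces a $K_5^-$ in $C_0\cup P_0$. "$C\cup P$ is the exceptional graph" means that the graph with edge set $E(C)\cup E(P)$ ($C,P$ edge-disjoint) is isomorphic to the exceptional graph. *)

theory Defs
  imports Main
begin

text \<open>Simple graphs given by a vertex set and a set of 2-element edges.\<close>
type_synonym 'a graph = "'a set \<times> 'a set set"

text \<open>A cycle is given by its cyclic sequence of distinct vertices (at least 3);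
its length is the number of vertices (= number of edges).\<close>
definition is_cycle :: "'a list \<Rightarrow> bool" where
  "is_cycle vs \<longleftrightarrow> distinct vs \<and> length vs \<ge> 3"

definition cyc_edges :: "'a list \<Rightarrow> 'a set set" where
  "cyc_edges vs = {{vs ! i, vs ! ((i + 1) mod length vs)} | i. i < length vs}"

definition is_path :: "'a list \<Rightarrow> bool" where
  "is_path vs \<longleftrightarrow> distinct vs \<and> vs \<noteq> []"

definition path_edges :: "'a list \<Rightarrow> 'a set set" where
  "path_edges vs = {{vs ! i, vs ! Suc i} | i. Suc i < length vs}"

definition graph_of :: "'a set set \<Rightarrow> 'a graph" where
  "graph_of E = (\<Union>E, E)"

definition induced :: "'a graph \<Rightarrow> 'a set \<Rightarrow> 'a graph" where
  "induced G S = (S, {e \<in> snd G. e \<subseteq> S})"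

definition graph_iso :: "'a graph \<Rightarrow> 'b graph \<Rightarrow> bool" where
  "graph_iso G H \<longleftrightarrow> (\<exists>f. bij_betw f (fst G) (fst H) \<and>
     (\<forall>x\<in>fst G. \<forall>y\<in>fst G. {x, y} \<in> snd G \<longleftrightarrow> {f x, f y} \<in> snd H))"

definition K5minus :: "nat graph" where
  "K5minus = ({0..4}, {{x, y} | x y. x \<in> {0..4} \<and> y \<in> {0..4} \<and> x \<noteq> y} - {{0, 1}})"

text \<open>An edge set E
"is the exceptional graph" if the graph with edge set E is isomorphic to it.\<close>
definition is_exceptional_graph :: "'a set set \<Rightarrow> bool" where
  "is_exceptional_graph E \<longleftrightarrow> (\<exists>(C0::nat list) P0.
     is_cycle C0 \<and> length C0 = 5 \<and> is_path P0 \<and>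
     cyc_edges C0 \<inter> path_edges P0 = {} \<and> set C0 \<subseteq> set P0 \<and>
     graph_iso (induced (graph_of (cyc_edges C0 \<union> path_edges P0)) (set C0)) K5minus \<and>
     graph_iso (graph_of E) (graph_of (cyc_edges C0 \<union> path_edges P0)))"

end

theory Submission
  imports Defs
begin


lemma iso_trans:
  assumes "graph_iso G H" "graph_iso H K" shows "graph_iso G K"
proof -
  obtain f where f: "bij_betw f (fst G) (fst H)"
    "\<forall>x\<in>fst G. \<forall>y\<in>fst G. {x, y} \<in> snd G \<longleftrightarrow> {f x, f y} \<in> snd H"
    using assms(1) unfolding graph_iso_def by blast
  obtain g where g: "bij_betw g (fst H) (fst K)"
    "\<forall>x\<in>fst H. \<forall>y\<in>fst H. {x, y} \<in> snd H \<longleftrightarrow> {g x, g y} \<in> snd K"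
    using assms(2) unfolding graph_iso_def by blast
  have "bij_betw (g \<circ> f) (fst G) (fst K)" using f(1) g(1) by (rule bij_betw_trans)
  moreover have "\<forall>x\<in>fst G. \<forall>y\<in>fst G. {x, y} \<in> snd G \<longleftrightarrow> {(g\<circ>f) x, (g\<circ>f) y} \<in> snd K"
  proof (intro ballI)
    fix x y assume xy: "x \<in> fst G" "y \<in> fst G"
    then have "f x \<in> fst H" "f y \<in> fst H" using f(1) bij_betwE by blast+
    then show "{x, y} \<in> snd G \<longleftrightarrow> {(g\<circ>f) x, (g\<circ>f) y} \<in> snd K"
      using f(2) g(2) xy by simp
  qed
  ultimately show ?thesis unfolding graph_iso_def by blast
qed

definition wfg :: "'a graph \<Rightarrow> bool" where
  "wfg G \<longleftrightarrow> (\<forall>e\<in>snd G. \<exists>x y. e = {x,y} \<and> x \<noteq> y \<and> x \<in> fst G \<and> y \<in> fst G)"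

lemma wfgD:
  assumes "wfg G" "e \<in> snd G" shows "\<exists>x y. e = {x,y} \<and> x \<noteq> y \<and> x \<in> fst G \<and> y \<in> fst G"
  using bspec[OF assms(1)[unfolded wfg_def] assms(2)] .

lemma iso_card:
  assumes "graph_iso G H" "wfg G" "wfg H" shows "card (snd G) = card (snd H)"
proof -
  obtain f where f: "bij_betw f (fst G) (fst H)"
    "\<forall>x\<in>fst G. \<forall>y\<in>fst G. {x, y} \<in> snd G \<longleftrightarrow> {f x, f y} \<in> snd H"
    using assms(1) unfolding graph_iso_def by blast
  have sub: "snd G \<subseteq> Pow (fst G)"
  proof
    fix e assume "e \<in> snd G"
    then obtain x y where "e = {x,y}" "x \<in> fst G" "y \<in> fst G"
      using wfgD[OF assms(2)] by blast
    then show "e \<in> Pow (fst G)" by simp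
  qed
  have inj: "inj_on (image f) (snd G)"
    by (rule inj_on_subset[OF inj_on_image_Pow[OF bij_betw_imp_inj_on[OF f(1)]] sub])
  have "image f ` snd G = snd H"
  proof
    show "image f ` snd G \<subseteq> snd H"
    proof
      fix e' assume "e' \<in> image f ` snd G"
      then obtain e where e: "e \<in> snd G" "e' = f ` e" by blast
      obtain x y where "e = {x,y}" "x \<in> fst G" "y \<in> fst G" using wfgD[OF assms(2) e(1)] by blast
      then show "e' \<in> snd H" using e f(2) by auto
    qed
  next
    show "snd H \<subseteq> image f ` snd G"
    proof
      fix e' assume e': "e' \<in> snd H"
      obtain a b where ab: "e' = {a,b}" "a \<in> fst H" "b \<in> fst H" using wfgD[OF assms(3) e'] by blast
      have im: "f ` fst G = fst H" using f(1) by (simp add: bij_betw_def)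
      have "a \<in> f ` fst G" "b \<in> f ` fst G" using im ab by simp_all
      then obtain x y where xy: "x \<in> fst G" "y \<in> fst G" "a = f x" "b = f y"
        by (elim imageE) simp
      then have "{x,y} \<in> snd G" using f(2) e' ab by auto
      moreover have "e' = f ` {x,y}" using ab xy by auto
      ultimately show "e' \<in> image f ` snd G" by blast
    qed
  qed
  then show ?thesis using inj card_image by fastforce
qed

lemma bij_restrict:
  assumes "bij_betw f A B" "S \<subseteq> B" shows "bij_betw f {x\<in>A. f x \<in> S} S"
  using assms unfolding bij_betw_def inj_on_def by auto

lemma iso_induced:
  assumes f: "bij_betw f (fst G) (fst H)"
    "\<forall>x\<in>fst G. \<forall>y\<in>fst G. {x, y} \<in> snd G \<longleftrightarrow> {f x, f y} \<in> snd H"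
    and S: "S \<subseteq> fst H"
  shows "graph_iso (induced G {x\<in>fst G. f x \<in> S}) (induced H S)"
  unfolding graph_iso_def induced_def
  using bij_restrict[OF f(1) S] f(2) by auto

lemma count_le:
  assumes "distinct vs" "\<forall>i\<in>I. i < length vs \<and> vs!i \<in> T" "k < length vs" "vs!k \<in> T" "k \<notin> I"
  shows "card I \<le> card (T \<inter> set vs) - 1"
proof -
  have inj: "inj_on (\<lambda>i. vs!i) I" using assms(1,2) unfolding inj_on_def
    by (simp add: nth_eq_iff_index_eq)
  have "(\<lambda>i. vs!i) ` I \<subseteq> (T \<inter> set vs) - {vs!k}"
    using assms by (auto simp: nth_eq_iff_index_eq)
  then have "card ((\<lambda>i. vs!i) ` I) \<le> card ((T \<inter> set vs) - {vs!k})"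
    by (intro card_mono) auto
  also have "\<dots> = card (T \<inter> set vs) - 1" using assms(3,4) by simp
  finally show ?thesis using card_image[OF inj] by simp
qed

lemma path_count:
  assumes "distinct P"
  shows "card {e\<in>path_edges P. e \<subseteq> T} \<le> card (T \<inter> set P) - 1"
proof -
  define I where "I = {i. Suc i < length P \<and> P!i \<in> T \<and> P!Suc i \<in> T}"
  have fI: "finite I" unfolding I_def by (rule finite_subset[of _ "{..<length P}"]) auto
  have "{e\<in>path_edges P. e \<subseteq> T} \<subseteq> (\<lambda>i. {P!i, P!Suc i}) ` I"
    unfolding path_edges_def I_def by auto
  then have "card {e\<in>path_edges P. e \<subseteq> T} \<le> card I"
    using fI by (meson card_image_le card_mono finite_imageI order_trans)
  also have "card I \<le> card (T \<inter> set P) - 1"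
  proof (cases "I = {}")
    case True then show ?thesis by simp
  next
    case False
    define k where "k = Suc (Max I)"
    have "Max I \<in> I" using False fI by simp
    then have k: "k < length P" "P!k \<in> T" unfolding k_def I_def by auto
    have "k \<notin> I" unfolding k_def using fI Max_ge by (metis Suc_n_not_le_n)
    moreover have "\<forall>i\<in>I. i < length P \<and> P!i \<in> T" unfolding I_def by auto
    ultimately show ?thesis using count_le[OF assms _ k] by blast
  qed
  finally show ?thesis .
qed

lemma exit_exists:
  assumes "j < length vs" "vs!j \<in> T" "k < length vs" "vs!k \<notin> T"
  shows "\<exists>i<length vs. vs!i \<in> T \<and> vs!((i+1) mod length vs) \<notin> T"
proof (rule ccontr)
  let ?n = "length vs"
  assume "\<not> ?thesis"
  then have step: "\<And>i. i < ?n \<Longrightarrow> vs!i \<in> T \<Longrightarrow> vs!((i+1) mod ?n) \<in> T" by blast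
  have all: "vs!((j+m) mod ?n) \<in> T" for m
  proof (induction m)
    case 0 then show ?case using assms by simp
  next
    case (Suc m)
    have "(j + Suc m) mod ?n = ((j+m) mod ?n + 1) mod ?n" by (simp add: mod_Suc_eq)
    moreover have "(j+m) mod ?n < ?n" using assms(1) by (metis less_nat_zero_code mod_less_divisor neq0_conv)
    ultimately show ?case using step Suc by metis
  qed
  have "(j + (k + ?n - j)) mod ?n = k" using assms by simp
  then show False using all[of "k + ?n - j"] assms(4) by simp
qed

lemma cyc_count:
  assumes "is_cycle C"
  shows "card {e\<in>cyc_edges C. e \<subseteq> T} \<le> card (T \<inter> set C)"
    and "\<not> set C \<subseteq> T \<Longrightarrow> card {e\<in>cyc_edges C. e \<subseteq> T} \<le> card (T \<inter> set C) - 1"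
proof -
  let ?n = "length C"
  define I where "I = {i. i < ?n \<and> C!i \<in> T \<and> C!((i+1) mod ?n) \<in> T}"
  have fI: "finite I" unfolding I_def by (rule finite_subset[of _ "{..<?n}"]) auto
  have "{e\<in>cyc_edges C. e \<subseteq> T} \<subseteq> (\<lambda>i. {C!i, C!((i+1) mod ?n)}) ` I"
    unfolding cyc_edges_def I_def by auto
  then have le: "card {e\<in>cyc_edges C. e \<subseteq> T} \<le> card I"
    using fI by (meson card_image_le card_mono finite_imageI order_trans)
  have d: "distinct C" using assms unfolding is_cycle_def by simp
  have inj: "inj_on (\<lambda>i. C!i) I" using d unfolding inj_on_def I_def
    by (simp add: nth_eq_iff_index_eq)
  have "(\<lambda>i. C!i) ` I \<subseteq> T \<inter> set C" unfolding I_def by auto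
  then have "card I \<le> card (T \<inter> set C)" using card_image[OF inj] card_mono
    by (metis finite_Int finite_set)
  then show "card {e\<in>cyc_edges C. e \<subseteq> T} \<le> card (T \<inter> set C)" using le by simp
  assume ns: "\<not> set C \<subseteq> T"
  show "card {e\<in>cyc_edges C. e \<subseteq> T} \<le> card (T \<inter> set C) - 1"
  proof (cases "I = {}")
    case True then show ?thesis using le by simp
  next
    case False
    then obtain j where "j \<in> I" by blast
    then have j: "j < ?n" "C!j \<in> T" unfolding I_def by auto
    obtain k where k: "k < ?n" "C!k \<notin> T" using ns by (metis in_set_conv_nth subsetI)
    obtain i where i: "i < ?n" "C!i \<in> T" "C!((i+1) mod ?n) \<notin> T"
      using exit_exists[OF j k] by blast
    have "i \<notin> I" using i unfolding I_def by auto
    moreover have "\<forall>i\<in>I. i < length C \<and> C!i \<in> T" unfolding I_def by auto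
    ultimately show ?thesis using count_le[OF d _ i(1,2)] le by fastforce
  qed
qed

lemma cyc_pair:
  assumes "is_cycle C" "e \<in> cyc_edges C" shows "\<exists>x y. e = {x,y} \<and> x \<noteq> y"
proof -
  obtain i where i: "i < length C" "e = {C!i, C!((i+1) mod length C)}"
    using assms(2) unfolding cyc_edges_def by blast
  have "length C \<ge> 3" "distinct C" using assms(1) unfolding is_cycle_def by auto
  moreover have "(i+1) mod length C \<noteq> i"
  proof (cases "i+1 < length C")
    case True then show ?thesis by simp
  next
    case False then have "i+1 = length C" using i(1) by simp
    then show ?thesis using \<open>length C \<ge> 3\<close> by simp
  qed
  moreover have "(i+1) mod length C < length C" using i(1) by (intro mod_less_divisor) (cases C; simp)
  ultimately have "C!i \<noteq> C!((i+1) mod length C)" using i(1) nth_eq_iff_index_eq by metis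
  then show ?thesis using i by blast
qed

lemma path_pair:
  assumes "is_path P" "e \<in> path_edges P" shows "\<exists>x y. e = {x,y} \<and> x \<noteq> y"
proof -
  obtain i where i: "Suc i < length P" "e = {P!i, P!Suc i}"
    using assms(2) unfolding path_edges_def by blast
  have "P!i \<noteq> P!Suc i" using assms(1) i(1) unfolding is_path_def by (simp add: nth_eq_iff_index_eq)
  then show ?thesis using i by blast
qed

lemma K5_wf: "wfg K5minus"
  unfolding wfg_def K5minus_def by auto

lemma K5_e: "x \<in> {0..4::nat} \<longleftrightarrow> x = 0 \<or> x = 1 \<or> x = 2 \<or> x = 3 \<or> x = 4" for x by auto

lemma K5_a: "{x,y} \<in> {{0,2},{0,3},{0,4},{1,2},{1,3},{1,4},{2,3},{2,4},{3,4::nat}}"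
    if "x \<in> {0..4}" "y \<in> {0..4}" "x \<noteq> y" "{x,y} \<noteq> {0,1::nat}" for x y
    using that unfolding K5_e by (elim disjE; simp add: insert_commute)

lemma K5_b: "{{0,2},{0,3},{0,4},{1,2},{1,3},{1,4},{2,3},{2,4},{3,4::nat}} \<subseteq> {{x, y} |x y. x \<in> {0..4} \<and> y \<in> {0..4} \<and> x \<noteq> y} - {{0, 1}}"
proof -
  have m: "{a,b} \<in> {{x, y} |x y. x \<in> {0..4} \<and> y \<in> {0..4} \<and> x \<noteq> y} - {{0, 1}}"
    if "a \<in> {0..4}" "b \<in> {0..4}" "a \<noteq> b" "{a,b} \<noteq> {0,1::nat}" for a b
    using that by blast
  show ?thesis
    apply (intro subsetI)
    apply (elim insertE emptyE)
    apply (hypsubst, rule m, simp, simp, simp, simp add: doubleton_eq_iff)+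
    done
qed

lemma K5_card: "card (snd K5minus) = 9"
proof -
  have "snd K5minus = {{0,2},{0,3},{0,4},{1,2},{1,3},{1,4},{2,3},{2,4},{3,4::nat}}"
    unfolding K5minus_def snd_conv
  proof (rule subset_antisym[OF _ K5_b])
    show "{{x, y} |x y. x \<in> {0..4} \<and> y \<in> {0..4} \<and> x \<noteq> y} - {{0, 1}} \<subseteq> {{0,2},{0,3},{0,4},{1,2},{1,3},{1,4},{2,3},{2,4},{3,4::nat}}"
    proof
      fix e assume "e \<in> {{x, y} |x y. x \<in> {0..4} \<and> y \<in> {0..4} \<and> x \<noteq> y} - {{0, 1::nat}}"
      then obtain x y where "e = {x,y}" "x \<in> {0..4}" "y \<in> {0..4}" "x \<noteq> y" "{x,y} \<noteq> {0,1::nat}" by blast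
      then show "e \<in> {{0,2},{0,3},{0,4},{1,2},{1,3},{1,4},{2,3},{2,4},{3,4::nat}}" using K5_a by simp
    qed
  qed
  then show ?thesis by (simp add: doubleton_eq_iff)
qed

theorem mainTheorem7:
  fixes C P :: "'a list"
  assumes "is_cycle C" and "is_path P"
    and "cyc_edges C \<inter> path_edges P = {}"
    and "is_exceptional_graph (cyc_edges C \<union> path_edges P)"
  shows "length C = 5 \<and> set C \<subseteq> set P \<and>
    graph_iso (induced (graph_of (cyc_edges C \<union> path_edges P)) (set C)) K5minus"
proof -
  define E where "E = cyc_edges C \<union> path_edges P"
  obtain C0 :: "nat list" and P0 where C0: "is_cycle C0" "length C0 = 5"
    and "is_path P0" "cyc_edges C0 \<inter> path_edges P0 = {}" "set C0 \<subseteq> set P0"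
    and K: "graph_iso (induced (graph_of (cyc_edges C0 \<union> path_edges P0)) (set C0)) K5minus"
    and I: "graph_iso (graph_of E) (graph_of (cyc_edges C0 \<union> path_edges P0))"
    using assms(4) unfolding is_exceptional_graph_def E_def[symmetric]
    apply - apply (elim exE conjE) apply (rule that) apply assumption+ done
  define E0 where "E0 = cyc_edges C0 \<union> path_edges P0"
  obtain f where f: "bij_betw f (fst (graph_of E)) (fst (graph_of E0))"
    "\<forall>x\<in>fst (graph_of E). \<forall>y\<in>fst (graph_of E). {x, y} \<in> snd (graph_of E) \<longleftrightarrow> {f x, f y} \<in> snd (graph_of E0)"
    using I unfolding graph_iso_def E0_def by blast
  define S0 where "S0 = set C0"
  have S0sub: "S0 \<subseteq> fst (graph_of E0)"
  proof
    fix v assume "v \<in> S0"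
    then obtain i where i: "i < length C0" "v = C0!i" unfolding S0_def by (metis in_set_conv_nth)
    then have "{C0!i, C0!((i+1) mod length C0)} \<in> E0" unfolding E0_def cyc_edges_def by blast
    then show "v \<in> fst (graph_of E0)" using i unfolding graph_of_def by auto
  qed
  define T where "T = {x\<in>fst (graph_of E). f x \<in> S0}"
  have iso1: "graph_iso (induced (graph_of E) T) (induced (graph_of E0) S0)"
    unfolding T_def by (rule iso_induced[OF f S0sub])
  have iso2: "graph_iso (induced (graph_of E) T) K5minus"
    using iso_trans[OF iso1] K unfolding S0_def E0_def by blast
  have pairE: "\<exists>x y. e = {x,y} \<and> x \<noteq> y" if "e \<in> E" for e
    using that cyc_pair[OF assms(1)] path_pair[OF assms(2)] unfolding E_def by blast
  have wf1: "wfg (induced (graph_of E) T)"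
    unfolding wfg_def induced_def fst_conv snd_conv
  proof
    fix e assume e: "e \<in> {e \<in> snd (graph_of E). e \<subseteq> T}"
    then have eE: "e \<in> E" "e \<subseteq> T" unfolding graph_of_def by auto
    obtain x y where "e = {x,y}" "x \<noteq> y" using pairE[OF eE(1)] by blast
    then show "\<exists>x y. e = {x, y} \<and> x \<noteq> y \<and> x \<in> T \<and> y \<in> T" using eE(2) by blast
  qed
  have c9: "card {e\<in>E. e \<subseteq> T} = 9"
    using iso_card[OF iso2 wf1 K5_wf] K5_card unfolding induced_def graph_of_def by simp
  have cT: "card T = 5"
    using bij_betw_same_card[OF bij_restrict[OF f(1) S0sub]] C0 distinct_card
    unfolding T_def S0_def is_cycle_def by metis
  have fT: "finite T" using cT by (metis card.infinite zero_neq_numeral)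
  have split: "{e\<in>E. e \<subseteq> T} = {e\<in>cyc_edges C. e \<subseteq> T} \<union> {e\<in>path_edges P. e \<subseteq> T}"
    unfolding E_def by auto
  have le9: "9 \<le> card {e\<in>cyc_edges C. e \<subseteq> T} + card {e\<in>path_edges P. e \<subseteq> T}"
  proof -
    have "card {e\<in>E. e \<subseteq> T} \<le> card {e\<in>cyc_edges C. e \<subseteq> T} + card {e\<in>path_edges P. e \<subseteq> T}"
      unfolding split by (rule card_Un_le)
    then show ?thesis using c9 by simp
  qed
  have dP: "distinct P" using assms(2) unfolding is_path_def by simp
  have dC: "distinct C" using assms(1) unfolding is_cycle_def by simp
  have pc: "card {e\<in>path_edges P. e \<subseteq> T} \<le> card (T \<inter> set P) - 1" by (rule path_count[OF dP])
  have cTP: "card (T \<inter> set P) \<le> 5" using cT fT by (metis card_mono inf_le1)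
  have cTC: "card (T \<inter> set C) \<le> 5" using cT fT by (metis card_mono inf_le1)
  have CT: "set C \<subseteq> T"
  proof (rule ccontr)
    assume "\<not> set C \<subseteq> T"
    then have "card {e\<in>cyc_edges C. e \<subseteq> T} \<le> card (T \<inter> set C) - 1" by (rule cyc_count(2)[OF assms(1)])
    then show False using le9 pc cTP cTC by linarith
  qed
  have cc: "card {e\<in>cyc_edges C. e \<subseteq> T} \<le> card (T \<inter> set C)" by (rule cyc_count(1)[OF assms(1)])
  have TC: "T \<inter> set C = set C" using CT by blast
  have lenC: "card (set C) = length C" using distinct_card[OF dC] .
  have "card (T \<inter> set P) = 5" using le9 pc cc cTP cTC by linarith
  then have TP: "T \<inter> set P = T" using cT fT by (metis card_subset_eq inf_le1)
  have "card (T \<inter> set C) = card (set C)" using TC by simp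
  then have "card (set C) = 5" using le9 pc cc cTP cTC by linarith
  then have CeqT: "set C = T" using CT cT fT by (metis card_subset_eq)
  show ?thesis using CeqT TP iso2 \<open>card (set C) = 5\<close> lenC unfolding E_def by auto
qed

end
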